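(* Let $G$ be any finite multiset of phase-free $n$-qubit Pauli strings and let $P\in\{I,X,Y,Z\}^n$ be any Pauli string. For $A\subseteq\operatorname{supp}(P)$ define $\mathcal{L}_P(A)=\{a:A\to\{X,Y,Z\}: a(j)\neq P_j\text{ for every }j\in A\}$, $D_G(A,a)=|\{Q\in G: A\subseteq\operatorname{supp}(Q)\text{ and }Q_j=a(j)\text{ for all }j\in A\}|$ (with multiplicity), and $F_G(P,A)=\sum_{a\in\mathcal{L}_P(A)}D_G(A,a)$. Let \[ Z_G(P)=\sum_{A\subseteq\operatorname{supp}(P)}(-2)^{|A|}F_G(P,A),\qquad \operatorname{anti}_G(P)=\frac{|G|-Z_G(P)}{2}. \] Then $\operatorname{anti}_G(P)$ equals the number of strings $Q\in G$ (counted with multiplicity) that anticommute with $P$, i.e. satisfy $PQ=-QP$ as $2^n\times 2^n$ matrices.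
   Context: A phase-free $n$-qubit Pauli string is a word $P=(P_1,\dots,P_n)\in\{I,X,Y,Z\}^n$ with $I$ the $2\times2$ identity, $X=\begin{pmatrix}0&1\\1&0\end{pmatrix}$, $Y=\begin{pmatrix}0&-i\\ i&0\end{pmatrix}$, $Z=\begin{pmatrix}1&0\\0&-1\end{pmatrix}$; it is identified with the matrix $P_1\otimes\cdots\otimes P_n$. Its support is $\operatorname{supp}(P)=\{j: P_j\neq I\}$. $|G|$ denotes the size of the multiset $G$ counted with multiplicity. *)

theory Defs
  imports Complex_Main "HOL-Library.Multiset" "HOL-Library.FuncSet" "Jordan_Normal_Form.Matrix"
begin

datatype pauli = I | X | Y | Z

definition pauli_matrix :: "pauli \<Rightarrow> complex mat" where
  "pauli_matrix p = (case p of
      I \<Rightarrow> mat_of_rows_list 2 [[1, 0], [0, 1]]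
    | X \<Rightarrow> mat_of_rows_list 2 [[0, 1], [1, 0]]
    | Y \<Rightarrow> mat_of_rows_list 2 [[0, -\<i>], [\<i>, 0]]
    | Z \<Rightarrow> mat_of_rows_list 2 [[1, 0], [0, -1]])"

definition kron :: "'a::times mat \<Rightarrow> 'a mat \<Rightarrow> 'a mat" where
  "kron A B = mat (dim_row A * dim_row B) (dim_col A * dim_col B)
     (\<lambda>(i, j). A $$ (i div dim_row B, j div dim_col B) * B $$ (i mod dim_row B, j mod dim_col B))"

definition pauli_string_matrix :: "pauli list \<Rightarrow> complex mat" where
  "pauli_string_matrix P = foldr (\<lambda>p M. kron (pauli_matrix p) M) P (1\<^sub>m 1)"

definition anticommute :: "pauli list \<Rightarrow> pauli list \<Rightarrow> bool" where
  "anticommute P Q \<longleftrightarrow>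
     pauli_string_matrix P * pauli_string_matrix Q = - (pauli_string_matrix Q * pauli_string_matrix P)"

definition supp :: "pauli list \<Rightarrow> nat set" where
  "supp P = {j. j < length P \<and> P ! j \<noteq> I}"

definition LP :: "pauli list \<Rightarrow> nat set \<Rightarrow> (nat \<Rightarrow> pauli) set" where
  "LP P A = {a \<in> A \<rightarrow>\<^sub>E {X, Y, Z}. \<forall>j\<in>A. a j \<noteq> P ! j}"

definition DG :: "pauli list multiset \<Rightarrow> nat set \<Rightarrow> (nat \<Rightarrow> pauli) \<Rightarrow> nat" where
  "DG G A a = size (filter_mset (\<lambda>Q. A \<subseteq> supp Q \<and> (\<forall>j\<in>A. Q ! j = a j)) G)"

definition FG :: "pauli list multiset \<Rightarrow> pauli list \<Rightarrow> nat set \<Rightarrow> nat" where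
  "FG G P A = (\<Sum>a\<in>LP P A. DG G A a)"

definition ZG :: "pauli list multiset \<Rightarrow> pauli list \<Rightarrow> int" where
  "ZG G P = (\<Sum>A\<in>Pow (supp P). (-2) ^ card A * int (FG G P A))"

definition antiG :: "pauli list multiset \<Rightarrow> pauli list \<Rightarrow> real" where
  "antiG G P = (real (size G) - real_of_int (ZG G P)) / 2"

end

theory Submission imports Defs begin

definition loc :: "pauli \<Rightarrow> pauli \<Rightarrow> bool" where
  "loc p q \<longleftrightarrow> p \<noteq> I \<and> q \<noteq> I \<and> p \<noteq> q"

definition sg :: "pauli \<Rightarrow> pauli \<Rightarrow> complex" where
  "sg p q = (if loc p q then -1 else 1)"

lemma pm_carrier: "pauli_matrix p \<in> carrier_mat 2 2"
  by (cases p) (auto simp: pauli_matrix_def mat_of_rows_list_def)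

lemma less2: "(i::nat) < 2 \<longleftrightarrow> i = 0 \<or> i = 1" by auto

lemma pm_comm: "pauli_matrix p * pauli_matrix q = sg p q \<cdot>\<^sub>m (pauli_matrix q * pauli_matrix p)"
  by (cases p; cases q) (auto intro!: eq_matI simp: pauli_matrix_def mat_of_rows_list_def sg_def loc_def
      scalar_prod_def lessThan_def numeral_2_eq_2 less_Suc_eq)

lemma pm_sq: "pauli_matrix p * pauli_matrix p = 1\<^sub>m 2"
  by (cases p) (auto intro!: eq_matI simp: pauli_matrix_def mat_of_rows_list_def
      scalar_prod_def lessThan_def numeral_2_eq_2 less_Suc_eq)

lemma sum_divmod: "(\<Sum>k<(a::nat)*b. g (k div b) (k mod b)) = (\<Sum>k1<a. \<Sum>k2<b. g k1 k2)"
proof (induction a)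
  case 0 then show ?case by simp
next
  case (Suc a)
  have "{..<Suc a * b} = {..<a*b} \<union> {a*b..<a*b+b}" by auto
  then have "(\<Sum>k<Suc a*b. g (k div b) (k mod b)) = (\<Sum>k<a*b. g (k div b) (k mod b)) + (\<Sum>k\<in>{a*b..<a*b+b}. g (k div b) (k mod b))"
    by (simp add: sum.union_disjoint ivl_disj_int)
  also have "(\<Sum>k\<in>{a*b..<a*b+b}. g (k div b) (k mod b)) = (\<Sum>k2<b. g a k2)"
  proof -
    have "(\<Sum>k\<in>{a*b..<a*b+b}. g (k div b) (k mod b)) = (\<Sum>k2\<in>{0..<b}. g ((k2 + a*b) div b) ((k2 + a*b) mod b))"
      using sum.shift_bounds_nat_ivl[of "\<lambda>k. g (k div b) (k mod b)" 0 "a*b" b] by (simp add: add.commute)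
    also have "\<dots> = (\<Sum>k2\<in>{0..<b}. g a k2)"
      by (rule sum.cong) auto
    finally show ?thesis by (simp add: atLeast0LessThan)
  qed
  finally show ?case using Suc by simp
qed

lemma kron_dims[simp]: "dim_row (kron A B) = dim_row A * dim_row B" "dim_col (kron A B) = dim_col A * dim_col B"
  by (auto simp: kron_def)

lemma kron_index: "i < dim_row A * dim_row B \<Longrightarrow> j < dim_col A * dim_col B \<Longrightarrow>
  kron A B $$ (i,j) = A $$ (i div dim_row B, j div dim_col B) * B $$ (i mod dim_row B, j mod dim_col B)"
  by (simp add: kron_def)

lemma kron_mult:
  fixes A B C D :: "'a::comm_semiring_0 mat"
  assumes A: "A \<in> carrier_mat a1 a2" and C: "C \<in> carrier_mat a2 a3"
    and B: "B \<in> carrier_mat b1 b2" and D: "D \<in> carrier_mat b2 b3"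
  shows "kron A B * kron C D = kron (A*C) (B*D)"
proof (rule eq_matI)
  show "dim_row (kron A B * kron C D) = dim_row (kron (A*C) (B*D))" using A B C D by simp
  show "dim_col (kron A B * kron C D) = dim_col (kron (A*C) (B*D))" using A B C D by simp
  fix i j assume "i < dim_row (kron (A*C) (B*D))" "j < dim_col (kron (A*C) (B*D))"
  then have i: "i < a1*b1" and j: "j < a3*b3" using A B C D by auto
  then have b1: "b1 > 0" and b3: "b3 > 0" by (auto intro: ccontr)
  have i1: "i div b1 < a1" using i by (simp add: less_mult_imp_div_less)
  have j1: "j div b3 < a3" using j by (simp add: less_mult_imp_div_less)
  have i2: "i mod b1 < b1" "j mod b3 < b3" using b1 b3 by auto
  have "(kron A B * kron C D) $$ (i,j) = (\<Sum>k<a2*b2. kron A B $$ (i,k) * kron C D $$ (k,j))"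
    using A B C D i j by (simp add: scalar_prod_def atLeast0LessThan)
  also have "\<dots> = (\<Sum>k<a2*b2. (A $$ (i div b1, k div b2) * B $$ (i mod b1, k mod b2)) *
        (C $$ (k div b2, j div b3) * D $$ (k mod b2, j mod b3)))"
    using A B C D i j by (intro sum.cong refl) (simp add: kron_index)
  also have "\<dots> = (\<Sum>k1<a2. \<Sum>k2<b2. (A $$ (i div b1, k1) * B $$ (i mod b1, k2)) *
        (C $$ (k1, j div b3) * D $$ (k2, j mod b3)))"
    by (rule sum_divmod)
  also have "\<dots> = (\<Sum>k1<a2. A $$ (i div b1, k1) * C $$ (k1, j div b3)) * (\<Sum>k2<b2. B $$ (i mod b1, k2) * D $$ (k2, j mod b3))"
    by (simp add: sum_product mult_ac)
  also have "\<dots> = kron (A*C) (B*D) $$ (i,j)"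
    using A B C D i j i1 j1 i2 by (simp add: kron_index scalar_prod_def atLeast0LessThan)
  finally show "(kron A B * kron C D) $$ (i,j) = kron (A*C) (B*D) $$ (i,j)" .
qed

lemma divmod_bounds: "(i::nat) < a * b \<Longrightarrow> i div b < a \<and> i mod b < b"
  by (metis less_mult_imp_div_less mod_less_divisor mult_0_right neq0_conv not_less0)

lemma kron_smult_left: "kron (c \<cdot>\<^sub>m A) B = c \<cdot>\<^sub>m kron (A::'a::comm_semiring_0 mat) B"
  by (rule eq_matI) (auto simp: kron_index mult_ac dest!: divmod_bounds)

lemma kron_smult_right: "kron A (c \<cdot>\<^sub>m B) = c \<cdot>\<^sub>m kron (A::'a::comm_semiring_0 mat) B"
  by (rule eq_matI) (auto simp: kron_index mult_ac dest!: divmod_bounds)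

lemma kron_one: "b > 0 \<Longrightarrow> kron (1\<^sub>m a) (1\<^sub>m b) = (1\<^sub>m (a*b) :: 'a::semiring_1 mat)"
  apply (rule eq_matI)
   apply (auto simp: kron_index dest!: divmod_bounds)
  by (metis div_mult_mod_eq)

lemma psm_Nil: "pauli_string_matrix [] = 1\<^sub>m 1"
  by (simp add: pauli_string_matrix_def)

lemma psm_Cons: "pauli_string_matrix (p#P) = kron (pauli_matrix p) (pauli_string_matrix P)"
  by (simp add: pauli_string_matrix_def)

lemma psm_carrier: "pauli_string_matrix P \<in> carrier_mat (2^length P) (2^length P)"
proof (induction P)
  case Nil then show ?case by (simp add: psm_Nil)
next
  case (Cons p P) then show ?case using pm_carrier[of p] by (auto simp: psm_Cons)
qed

lemma psm_sq: "pauli_string_matrix P * pauli_string_matrix P = 1\<^sub>m (2^length P)"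
proof (induction P)
  case Nil then show ?case by (simp add: psm_Nil)
next
  case (Cons p P)
  have "pauli_string_matrix (p#P) * pauli_string_matrix (p#P)
     = kron (pauli_matrix p * pauli_matrix p) (pauli_string_matrix P * pauli_string_matrix P)"
    unfolding psm_Cons by (rule kron_mult[OF pm_carrier pm_carrier psm_carrier psm_carrier])
  also have "\<dots> = 1\<^sub>m (2^length (p#P))" using Cons by (simp add: pm_sq kron_one)
  finally show ?case .
qed

lemma smult_smult_mat: "a \<cdot>\<^sub>m (b \<cdot>\<^sub>m M) = (a * b :: 'a::semigroup_mult) \<cdot>\<^sub>m M"
  by (rule eq_matI) (auto simp: mult.assoc)

lemma one_smult_mat': "(1::'a::monoid_mult) \<cdot>\<^sub>m M = M"
proof (rule eq_matI)
  fix i j assume "i < dim_row M" "j < dim_col M"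
  then show "(1 \<cdot>\<^sub>m M) $$ (i, j) = M $$ (i, j)" by simp
qed simp_all

lemma psm_comm: "length P = length Q \<Longrightarrow>
  pauli_string_matrix P * pauli_string_matrix Q = (\<Prod>j<length P. sg (P!j) (Q!j)) \<cdot>\<^sub>m (pauli_string_matrix Q * pauli_string_matrix P)"
proof (induction P Q rule: list_induct2)
  case Nil then show ?case by (simp add: psm_Nil) (rule one_smult_mat'[symmetric])
next
  case (Cons p P q Q)
  have "pauli_string_matrix (p#P) * pauli_string_matrix (q#Q)
     = kron (pauli_matrix p * pauli_matrix q) (pauli_string_matrix P * pauli_string_matrix Q)"
    unfolding psm_Cons using Cons(1) psm_carrier[of Q]
    by (intro kron_mult[OF pm_carrier pm_carrier psm_carrier]) simp
  also have "\<dots> = kron (sg p q \<cdot>\<^sub>m (pauli_matrix q * pauli_matrix p))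
      ((\<Prod>j<length P. sg (P!j) (Q!j)) \<cdot>\<^sub>m (pauli_string_matrix Q * pauli_string_matrix P))"
    by (simp only: pm_comm[of p q] Cons(2))
  also have "\<dots> = (sg p q * (\<Prod>j<length P. sg (P!j) (Q!j))) \<cdot>\<^sub>m
       kron (pauli_matrix q * pauli_matrix p) (pauli_string_matrix Q * pauli_string_matrix P)"
    by (simp add: kron_smult_left kron_smult_right smult_smult_mat mult.commute)
  also have "kron (pauli_matrix q * pauli_matrix p) (pauli_string_matrix Q * pauli_string_matrix P)
     = pauli_string_matrix (q#Q) * pauli_string_matrix (p#P)"
    unfolding psm_Cons using Cons(1) psm_carrier[of P]
    by (intro kron_mult[OF pm_carrier pm_carrier psm_carrier, symmetric]) simp
  also have "sg p q * (\<Prod>j<length P. sg (P!j) (Q!j)) = (\<Prod>j<length (p#P). sg ((p#P)!j) ((q#Q)!j))"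
    by (simp only: length_Cons prod.lessThan_Suc_shift nth_Cons_0 nth_Cons_Suc)
  finally show ?case .
qed

lemma prod_sg: "(\<Prod>j<n. sg (P!j) (Q!j)) = (-1) ^ card {j. j<n \<and> loc (P!j) (Q!j)}"
proof -
  have eq: "{..<n} \<inter> {j. loc (P!j) (Q!j)} = {j. j<n \<and> loc (P!j) (Q!j)}" by auto
  show ?thesis unfolding sg_def by (simp add: prod.If_cases eq)
qed

lemma anti_iff: assumes "length P = length Q"
  shows "anticommute P Q \<longleftrightarrow> odd (card {j. j < length P \<and> loc (P!j) (Q!j)})"
proof -
  define d :: nat where "d = 2 ^ length P"
  define M where "M = pauli_string_matrix P"
  define N where "N = pauli_string_matrix Q"
  define c where "c = card {j. j < length P \<and> loc (P!j) (Q!j)}"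
  have M: "M \<in> carrier_mat d d" and N: "N \<in> carrier_mat d d"
    using psm_carrier[of P] psm_carrier[of Q] assms by (auto simp: M_def N_def d_def)
  have MM: "M * M = 1\<^sub>m d" and NN: "N * N = 1\<^sub>m d"
    using psm_sq[of P] psm_sq[of Q] assms by (auto simp: M_def N_def d_def)
  have comm: "M * N = ((-1) ^ c) \<cdot>\<^sub>m (N * M)"
    using psm_comm[OF assms] prod_sg by (simp add: M_def N_def c_def)
  have d0: "d > 0" by (simp add: d_def)
  show ?thesis
  proof (cases "odd c")
    case True
    then have "M * N = - (N * M)" using comm by (intro eq_matI) auto
    then show ?thesis using True by (simp add: anticommute_def M_def N_def c_def)
  next
    case False
    then have MN: "M * N = N * M" using comm by (intro eq_matI) auto
    have "\<not> M * N = - (N * M)"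
    proof
      assume h: "M * N = - (N * M)"
      have "N * M = 0\<^sub>m d d"
      proof (rule eq_matI)
        fix i j assume ij: "i < dim_row (0\<^sub>m d d :: complex mat)" "j < dim_col (0\<^sub>m d d :: complex mat)"
        have "(N*M) $$ (i,j) = (-(N*M)) $$ (i,j)" using h MN by simp
        then show "(N*M) $$ (i,j) = 0\<^sub>m d d $$ (i,j)" using ij M N by simp
      qed (use M N in auto)
      then have "(N * M) * (M * N) = 0\<^sub>m d d" using M N by (simp del: assoc_mult_mat)
      moreover have "(N * M) * (M * N) = 1\<^sub>m d"
      proof -
        have "(N * M) * (M * N) = N * (M * (M * N))" by (rule assoc_mult_mat) (use M N in auto)
        also have "M * (M * N) = (M * M) * N" using M N by (simp add: assoc_mult_mat[of M d d M d])
        also have "\<dots> = N" using MM N by simp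
        finally show ?thesis using NN by simp
      qed
      ultimately have "(1\<^sub>m d :: complex mat) $$ (0,0) = 0\<^sub>m d d $$ (0,0)" by simp
      then show False using d0 by simp
    qed
    then show ?thesis using False by (simp add: anticommute_def M_def N_def c_def)
  qed
qed

definition SS :: "pauli list \<Rightarrow> pauli list \<Rightarrow> nat set" where
  "SS P Q = {j. j < length P \<and> loc (P!j) (Q!j)}"

lemma SS_supp: "SS P Q \<subseteq> supp P"
  by (auto simp: SS_def supp_def loc_def)

lemma finite_supp: "finite (supp P)"
  by (simp add: supp_def)

lemma nonI: "q \<noteq> I \<longleftrightarrow> q \<in> {X, Y, Z}"
  by (cases q) auto

lemma LP_set: assumes "A \<subseteq> supp P" "length Q = length P"
  shows "{a\<in>LP P A. A \<subseteq> supp Q \<and> (\<forall>j\<in>A. Q ! j = a j)} =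
     (if A \<subseteq> SS P Q then {restrict (\<lambda>j. Q!j) A} else {})"
proof (cases "A \<subseteq> SS P Q")
  case True
  have loc: "loc (P!j) (Q!j)" if "j \<in> A" for j using True that by (auto simp: SS_def)
  have "Q!j \<in> {X,Y,Z} \<and> Q!j \<noteq> P!j" if "j \<in> A" for j
    using loc[OF that] nonI[of "Q!j"] unfolding loc_def by metis
  then have r: "restrict (\<lambda>j. Q!j) A \<in> LP P A"
    unfolding LP_def by auto
  have s: "A \<subseteq> supp Q"
  proof
    fix j assume "j \<in> A"
    then show "j \<in> supp Q" using True assms unfolding SS_def supp_def loc_def by auto
  qed
  have u: "a = restrict (\<lambda>j. Q!j) A" if "a \<in> LP P A" "\<forall>j\<in>A. Q ! j = a j" for a
  proof
    fix j
    have "a \<in> extensional A" using that(1) unfolding LP_def by (auto simp: PiE_iff)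
    then show "a j = restrict (\<lambda>j. Q!j) A j" using that(2)
      by (cases "j \<in> A") (auto simp: extensional_def)
  qed
  have "{a\<in>LP P A. A \<subseteq> supp Q \<and> (\<forall>j\<in>A. Q ! j = a j)} = {restrict (\<lambda>j. Q!j) A}"
  proof (intro equalityI subsetI)
    fix a assume "a \<in> {a\<in>LP P A. A \<subseteq> supp Q \<and> (\<forall>j\<in>A. Q ! j = a j)}"
    then show "a \<in> {restrict (\<lambda>j. Q!j) A}" using u by blast
  next
    fix a assume "a \<in> {restrict (\<lambda>j. Q!j) A}"
    then show "a \<in> {a\<in>LP P A. A \<subseteq> supp Q \<and> (\<forall>j\<in>A. Q ! j = a j)}" using r s by simp
  qed
  then show ?thesis using True by simp
next
  case False
  have "\<not> (a \<in> LP P A \<and> A \<subseteq> supp Q \<and> (\<forall>j\<in>A. Q ! j = a j))" for a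
  proof
    assume h: "a \<in> LP P A \<and> A \<subseteq> supp Q \<and> (\<forall>j\<in>A. Q ! j = a j)"
    have "A \<subseteq> SS P Q"
    proof
      fix j assume j: "j \<in> A"
      then have "j < length P" "P!j \<noteq> I" using assms(1) by (auto simp: supp_def)
      moreover have "Q!j \<noteq> I" using h j by (auto simp: supp_def)
      moreover have "Q!j \<noteq> P!j" using h j by (auto simp: LP_def)
      ultimately show "j \<in> SS P Q" by (simp add: SS_def loc_def)
    qed
    then show False using False by simp
  qed
  then have "{a\<in>LP P A. A \<subseteq> supp Q \<and> (\<forall>j\<in>A. Q ! j = a j)} = {}" by blast
  then show ?thesis using False by simp
qed

lemma finite_LP: "finite A \<Longrightarrow> finite (LP P A)"
proof -
  assume "finite A"
  then have "finite (A \<rightarrow>\<^sub>E {X, Y, Z})" by (simp add: finite_PiE)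
  then show ?thesis unfolding LP_def by simp
qed

lemma count1: assumes "A \<subseteq> supp P" "length Q = length P"
  shows "(\<Sum>a\<in>LP P A. if A \<subseteq> supp Q \<and> (\<forall>j\<in>A. Q ! j = a j) then 1 else 0 :: nat)
     = (if A \<subseteq> SS P Q then 1 else 0)"
proof -
  have fin: "finite (LP P A)" using assms(1) finite_supp finite_LP finite_subset by blast
  have "(\<Sum>a\<in>LP P A. if A \<subseteq> supp Q \<and> (\<forall>j\<in>A. Q ! j = a j) then 1 else 0 :: nat)
      = card {a\<in>LP P A. A \<subseteq> supp Q \<and> (\<forall>j\<in>A. Q ! j = a j)}"
    using fin by (simp add: sum.If_cases Int_def conj_commute)
  also have "\<dots> = (if A \<subseteq> SS P Q then 1 else 0)" using LP_set[OF assms] by simp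
  finally show ?thesis .
qed

lemma pow_sum: "finite S \<Longrightarrow> (\<Sum>A\<in>Pow S. (-2::int) ^ card A) = (-1) ^ card S"
proof (induction S rule: finite_induct)
  case empty then show ?case by simp
next
  case (insert x F)
  have disj: "Pow F \<inter> insert x ` Pow F = {}" using insert by auto
  have inj: "inj_on (insert x) (Pow F)" using insert unfolding inj_on_def by (metis PowD insert_ident subset_iff)
  have "(\<Sum>A\<in>Pow (insert x F). (-2::int) ^ card A) = (\<Sum>A\<in>Pow F. (-2::int) ^ card A) + (\<Sum>A\<in>insert x ` Pow F. (-2::int) ^ card A)"
    unfolding Pow_insert using insert disj by (simp add: sum.union_disjoint)
  also have "(\<Sum>A\<in>insert x ` Pow F. (-2::int) ^ card A) = (\<Sum>A\<in>Pow F. (-2::int) ^ card (insert x A))"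
    using inj by (simp add: sum.reindex)
  also have "\<dots> = (\<Sum>A\<in>Pow F. (-2) * (-2::int) ^ card A)"
  proof (rule sum.cong)
    fix A assume "A \<in> Pow F"
    then have "finite A" "x \<notin> A" using insert finite_subset by auto
    then show "(-2::int) ^ card (insert x A) = (-2) * (-2) ^ card A" by simp
  qed simp
  also have "\<dots> = (-2) * (\<Sum>A\<in>Pow F. (-2::int) ^ card A)" by (rule sum_distrib_left[symmetric])
  finally show ?case using insert by simp
qed

lemma ZG_empty: "ZG {#} P = 0"
  by (simp add: ZG_def FG_def DG_def)

lemma ZG_add: assumes "length Q = length P"
  shows "ZG (add_mset Q G) P = ZG G P + (-1) ^ card (SS P Q)"
proof -
  have F: "FG (add_mset Q G) P A = FG G P A + (if A \<subseteq> SS P Q then 1 else 0)" if "A \<subseteq> supp P" for A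
  proof -
    have "FG (add_mset Q G) P A = (\<Sum>a\<in>LP P A. DG G A a + (if A \<subseteq> supp Q \<and> (\<forall>j\<in>A. Q ! j = a j) then 1 else 0))"
      unfolding FG_def DG_def by (intro sum.cong) auto
    also have "\<dots> = FG G P A + (if A \<subseteq> SS P Q then 1 else 0)"
      using count1[OF that assms] by (simp add: sum.distrib FG_def)
    finally show ?thesis .
  qed
  have "ZG (add_mset Q G) P = (\<Sum>A\<in>Pow (supp P). (-2) ^ card A * int (FG G P A) + (if A \<subseteq> SS P Q then (-2) ^ card A else 0))"
    unfolding ZG_def by (intro sum.cong) (auto simp: F algebra_simps)
  also have "\<dots> = ZG G P + (\<Sum>A\<in>Pow (supp P). (if A \<subseteq> SS P Q then (-2) ^ card A else 0))"
    by (simp add: sum.distrib ZG_def)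
  also have "(\<Sum>A\<in>Pow (supp P). (if A \<subseteq> SS P Q then (-2::int) ^ card A else 0)) = (\<Sum>A\<in>Pow (SS P Q). (-2) ^ card A)"
  proof -
    have "Pow (supp P) \<inter> {A. A \<subseteq> SS P Q} = Pow (SS P Q)" using SS_supp by auto
    then show ?thesis using finite_supp by (simp add: sum.If_cases)
  qed
  also have "\<dots> = (-1) ^ card (SS P Q)"
    using pow_sum finite_subset[OF SS_supp finite_supp] by blast
  finally show ?thesis .
qed

lemma ZG_count: "\<forall>Q\<in>#G. length Q = length P \<Longrightarrow>
   ZG G P = int (size G) - 2 * int (size (filter_mset (\<lambda>Q. anticommute P Q) G))"
proof (induction G)
  case empty then show ?case by (simp add: ZG_empty)
next
  case (add Q G)
  then have l: "length Q = length P" by simp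
  have "anticommute P Q \<longleftrightarrow> odd (card (SS P Q))"
    using anti_iff[of P Q] l by (simp add: SS_def)
  then show ?case using add ZG_add[OF l, of G] by (auto simp: minus_one_power_iff)
qed

theorem theorem1:
  fixes n :: nat and G :: "pauli list multiset" and P :: "pauli list"
  assumes "length P = n"
    and "\<forall>Q\<in>#G. length Q = n"
  shows "antiG G P = real (size (filter_mset (\<lambda>Q. anticommute P Q) G))"
proof -
  have "ZG G P = int (size G) - 2 * int (size (filter_mset (\<lambda>Q. anticommute P Q) G))"
    using ZG_count assms by simp
  then show ?thesis unfolding antiG_def by simp
qed

end
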